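(* Let $m_1\ge1$, $m_2\ge0$, and let $F_i:[0,\infty)^{m_1}\to\mathbb{R}$, $G_i:[0,\infty)^{m_1+m_2}\to\mathbb{R}$ ($i=1,\dots,m_1$), $H_j:[0,\infty)^{m_1+m_2}\to\mathbb{R}$ ($j=1,\dots,m_2$). Assume there exist an $(m_1+m_2)\times(m_1+m_2)$ lower triangular matrix $A=(a_{kl})$ with nonnegative entries and diagonal entries $1$, exponents $p_\Omega,p_M,\mu_M$ and a constant $L_2\ge0$ such that for all $u\in[0,\infty)^{m_1},v\in[0,\infty)^{m_2}$: for every $k$, $\sum_{l\le m_1}a_{kl}F_l(u)\le L_2(\sum_iu_i^{p_\Omega}+1)$; for $k\le m_1$, $\sum_{l\le m_1}a_{kl}G_l(u,v)\le L_2(\sum_iu_i^{p_M}+\sum_jv_j^{p_M}+1)$; for $k>m_1$, $\sum_{l\le m_1}a_{kl}G_l(u,v)+\sum_{l\le m_2}a_{k,m_1+l}H_l(u,v)\le L_2(\sum_iu_i^{\mu_M}+\sum_jv_j^{\mu_M}+1)$. Then there exist componentwise increasing functions $g_j:\mathbb{R}^{m_1-j}\to\mathbb{R}$, $j=1,\dots,m_1-1$, such that whenever $\ell\in(0,\infty)^{m_1}$ satisfies $\ell_j>g_j(\ell_{j+1},\dots,\ell_{m_1})$ for $j=1,\dots,m_1-1$, there exists $L_\ell>0$ with $$\sum_{i=1}^{m_1}\ell_iF_i(u)\le L_\ell\Big(\sum_{i=1}^{m_1}u_i^{p_\Omega}+1\Big)\ \ \forall u\in[0,\infty)^{m_1},\qquad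 \sum_{i=1}^{m_1}\ell_iG_i(u,v)\le L_\ell\Big(\sum_{i=1}^{m_1}u_i^{p_M}+\sum_{j=1}^{m_2}v_j^{p_M}+1\Big)\ \ \forall u,v\ge0.$$ *)

theory Defs
  imports Complex_Main
begin

text \<open>Vectors are functions nat => real, with indices 1..m relevant.
  Nonnegative vectors of dimension m (only indices 1..m are constrained).\<close>
definition nonneg_vec :: "nat \<Rightarrow> (nat \<Rightarrow> real) \<Rightarrow> bool" where
  "nonneg_vec m u \<longleftrightarrow> (\<forall>i\<in>{1..m}. 0 \<le> u i)"

definition pos_vec :: "nat \<Rightarrow> (nat \<Rightarrow> real) \<Rightarrow> bool" where
  "pos_vec m u \<longleftrightarrow> (\<forall>i\<in>{1..m}. 0 < u i)"

definition comp_incr :: "nat \<Rightarrow> (real list \<Rightarrow> real) \<Rightarrow> bool" where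
  "comp_incr n g \<longleftrightarrow> (\<forall>xs ys. length xs = n \<and> length ys = n \<and> list_all2 (\<le>) xs ys \<longrightarrow> g xs \<le> g ys)"

end

theory Submission
  imports Defs
begin

lemma peel:
  fixes A :: "nat \<Rightarrow> nat \<Rightarrow> real" and f :: "nat \<Rightarrow> real" and B :: real
  assumes "\<forall>k\<in>{1..m}. \<forall>l\<in>{1..m}. k < l \<longrightarrow> A k l = 0"
    and "\<forall>k\<in>{1..m}. \<forall>l\<in>{1..m}. 0 \<le> A k l"
    and "\<forall>k\<in>{1..m}. A k k = 1"
    and "\<forall>k\<in>{1..m}. (\<Sum>l=1..m. A k l * f l) \<le> B"
    and "B \<ge> 0"
    and "\<forall>j\<in>{1..m}. 0 \<le> w j"
    and "\<forall>j\<in>{1..m}. (\<Sum>k=j+1..m. w k * A k j) \<le> w j"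
  shows "(\<Sum>l=1..m. w l * f l) \<le> (\<Sum>l=1..m. w l) * B"
  using assms
proof (induction m arbitrary: w)
  case 0
  then show ?case by simp
next
  case (Suc m)
  note low = Suc.prems(1) and nn = Suc.prems(2) and dg = Suc.prems(3) and R = Suc.prems(4)
    and B0 = Suc.prems(5) and w0 = Suc.prems(6) and wc = Suc.prems(7)
  define w' where "w' = (\<lambda>l. w l - w (Suc m) * A (Suc m) l)"
  have R': "\<forall>k\<in>{1..m}. (\<Sum>l=1..m. A k l * f l) \<le> B"
  proof
    fix k assume k: "k \<in> {1..m}"
    have "A k (Suc m) = 0" using low k by auto
    then have "(\<Sum>l=1..Suc m. A k l * f l) = (\<Sum>l=1..m. A k l * f l)" by simp
    moreover have "k \<in> {1..Suc m}" using k by auto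
    ultimately show "(\<Sum>l=1..m. A k l * f l) \<le> B" using R by metis
  qed
  have wc': "\<forall>j\<in>{1..m}. (\<Sum>k=j+1..m. w' k * A k j) \<le> w' j"
  proof
    fix j assume j: "j \<in> {1..m}"
    have "(\<Sum>k=j+1..m. w' k * A k j) \<le> (\<Sum>k=j+1..m. w k * A k j)"
    proof (rule sum_mono)
      fix k assume k: "k \<in> {j+1..m}"
      have "0 \<le> w (Suc m) * A (Suc m) k * A k j"
        using w0 nn j k by auto
      then show "w' k * A k j \<le> w k * A k j" unfolding w'_def by (simp add: algebra_simps)
    qed
    also have "(\<Sum>k=j+1..Suc m. w k * A k j) = (\<Sum>k=j+1..m. w k * A k j) + w (Suc m) * A (Suc m) j"
      using j by simp
    hence "(\<Sum>k=j+1..m. w k * A k j) = (\<Sum>k=j+1..Suc m. w k * A k j) - w (Suc m) * A (Suc m) j" by simp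
    also have "\<dots> \<le> w' j"
    proof -
      have "j \<in> {1..Suc m}" using j by auto
      then have "(\<Sum>k=j+1..Suc m. w k * A k j) \<le> w j" using wc by blast
      then show ?thesis unfolding w'_def by linarith
    qed
    finally show "(\<Sum>k=j+1..m. w' k * A k j) \<le> w' j" .
  qed
  have w0': "\<forall>j\<in>{1..m}. 0 \<le> w' j"
  proof
    fix j assume j: "j \<in> {1..m}"
    have s0: "0 \<le> (\<Sum>k=j+1..m. w k * A k j)"
      using w0 nn j by (intro sum_nonneg) auto
    have "(\<Sum>k=j+1..Suc m. w k * A k j) = (\<Sum>k=j+1..m. w k * A k j) + w (Suc m) * A (Suc m) j"
      using j by simp
    moreover have "j \<in> {1..Suc m}" using j by auto
    then have "(\<Sum>k=j+1..Suc m. w k * A k j) \<le> w j" using wc by blast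
    ultimately show "0 \<le> w' j" using s0 unfolding w'_def by linarith
  qed
  have IH: "(\<Sum>l=1..m. w' l * f l) \<le> (\<Sum>l=1..m. w' l) * B"
    using Suc.IH[of w'] low nn dg R' B0 w0' wc' by auto
  have e1: "(\<Sum>l=1..Suc m. w l * f l) = w (Suc m) * (\<Sum>l=1..Suc m. A (Suc m) l * f l) + (\<Sum>l=1..m. w' l * f l)"
    using dg unfolding w'_def
    by (simp add: sum_distrib_left algebra_simps sum_subtractf)
  have "(\<Sum>l=1..m. w' l) \<le> (\<Sum>l=1..m. w l)"
    unfolding w'_def using w0 nn by (intro sum_mono) (auto intro!: mult_nonneg_nonneg)
  hence e2: "(\<Sum>l=1..m. w' l) * B \<le> (\<Sum>l=1..m. w l) * B" using B0 by (rule mult_right_mono)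
  have e3: "w (Suc m) * (\<Sum>l=1..Suc m. A (Suc m) l * f l) \<le> w (Suc m) * B"
    using R w0 by (intro mult_left_mono) auto
  show ?case using e1 e2 e3 IH by (simp add: algebra_simps)
qed


lemma shift_sum:
  fixes n j :: nat and h :: "nat \<Rightarrow> real"
  shows "(\<Sum>i<n. h (j+1+i)) = (\<Sum>k=j+1..j+n. h k)"
proof (induction n)
  case 0 then show ?case by simp
next
  case (Suc n) then show ?case by (simp add: add.commute add.left_commute)
qed

lemma g_eval:
  assumes "j \<le> m"
  shows "(\<Sum>i<length (map lv [j+1..<m+1]). map lv [j+1..<m+1] ! i * A (j+1+i) j)
     = (\<Sum>k=j+1..m. lv k * (A k j::real))"
proof -
  have "(\<Sum>i<length (map lv [j+1..<m+1]). map lv [j+1..<m+1] ! i * A (j+1+i) j)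
      = (\<Sum>i<m-j. lv (j+1+i) * A (j+1+i) j)"
    by (intro sum.cong) (simp_all del: upt_Suc add: nth_map nth_upt)
  also have "\<dots> = (\<Sum>k=j+1..j+(m-j). lv k * A k j)" by (rule shift_sum)
  finally show ?thesis using assms by simp
qed

lemma final_bound:
  fixes X S B L2 :: real
  assumes "S \<le> T * (L2 * X)" "X \<ge> 1" "T \<ge> 0" "L2 \<ge> 0"
  shows "S \<le> (T * L2 + 1) * X"
  using assms by (simp add: algebra_simps)

theorem lemma2p3:
  fixes m1 m2 :: nat
    and F :: "nat \<Rightarrow> (nat \<Rightarrow> real) \<Rightarrow> real"
    and G H :: "nat \<Rightarrow> (nat \<Rightarrow> real) \<Rightarrow> (nat \<Rightarrow> real) \<Rightarrow> real"
    and A :: "nat \<Rightarrow> nat \<Rightarrow> real"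
    and p\<Omega> pM \<mu>M L2 :: real
  assumes m1: "m1 \<ge> 1"
    and A_nonneg: "\<forall>k\<in>{1..m1+m2}. \<forall>l\<in>{1..m1+m2}. 0 \<le> A k l"
    and A_lower: "\<forall>k\<in>{1..m1+m2}. \<forall>l\<in>{1..m1+m2}. k < l \<longrightarrow> A k l = 0"
    and A_diag: "\<forall>k\<in>{1..m1+m2}. A k k = 1"
    and L2: "L2 \<ge> 0"
    and hF: "\<forall>u. nonneg_vec m1 u \<longrightarrow> (\<forall>k\<in>{1..m1+m2}.
              (\<Sum>l=1..m1. A k l * F l u) \<le> L2 * ((\<Sum>i=1..m1. u i powr p\<Omega>) + 1))"
    and hG: "\<forall>u v. nonneg_vec m1 u \<longrightarrow> nonneg_vec m2 v \<longrightarrow> (\<forall>k\<in>{1..m1}.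
              (\<Sum>l=1..m1. A k l * G l u v)
                \<le> L2 * ((\<Sum>i=1..m1. u i powr pM) + (\<Sum>j=1..m2. v j powr pM) + 1))"
    and hH: "\<forall>u v. nonneg_vec m1 u \<longrightarrow> nonneg_vec m2 v \<longrightarrow> (\<forall>k\<in>{m1+1..m1+m2}.
              (\<Sum>l=1..m1. A k l * G l u v) + (\<Sum>l=1..m2. A k (m1+l) * H l u v)
                \<le> L2 * ((\<Sum>i=1..m1. u i powr \<mu>M) + (\<Sum>j=1..m2. v j powr \<mu>M) + 1))"
  shows "\<exists>g :: nat \<Rightarrow> real list \<Rightarrow> real.
           (\<forall>j\<in>{1..m1-1}. comp_incr (m1 - j) (g j)) \<and>
           (\<forall>lv. pos_vec m1 lv \<and> (\<forall>j\<in>{1..m1-1}. lv j > g j (map lv [j+1..<m1+1])) \<longrightarrow>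
              (\<exists>Ll > 0.
                 (\<forall>u. nonneg_vec m1 u \<longrightarrow>
                    (\<Sum>i=1..m1. lv i * F i u) \<le> Ll * ((\<Sum>i=1..m1. u i powr p\<Omega>) + 1)) \<and>
                 (\<forall>u v. nonneg_vec m1 u \<longrightarrow> nonneg_vec m2 v \<longrightarrow>
                    (\<Sum>i=1..m1. lv i * G i u v)
                      \<le> Ll * ((\<Sum>i=1..m1. u i powr pM) + (\<Sum>j=1..m2. v j powr pM) + 1))))"
proof -
  define g :: "nat \<Rightarrow> real list \<Rightarrow> real" where
    "g = (\<lambda>j xs. \<Sum>i<length xs. xs ! i * A (j+1+i) j)"
  have inc: "\<forall>j\<in>{1..m1-1}. comp_incr (m1 - j) (g j)"
  proof
    fix j assume j: "j \<in> {1..m1-1}"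
    show "comp_incr (m1 - j) (g j)"
      unfolding comp_incr_def
    proof (intro allI impI)
      fix xs ys :: "real list"
      assume h: "length xs = m1 - j \<and> length ys = m1 - j \<and> list_all2 (\<le>) xs ys"
      show "g j xs \<le> g j ys" unfolding g_def
      proof -
        have "(\<Sum>i<length xs. xs ! i * A (j+1+i) j) \<le> (\<Sum>i<length xs. ys ! i * A (j+1+i) j)"
        proof (rule sum_mono)
          fix i assume i: "i \<in> {..<length xs}"
          have "xs ! i \<le> ys ! i" using h i list_all2_nthD by blast
          moreover have "0 \<le> A (j+1+i) j" using A_nonneg i h j by auto
          ultimately show "xs ! i * A (j+1+i) j \<le> ys ! i * A (j+1+i) j"
            by (rule mult_right_mono)
        qed
        then show "(\<Sum>i<length xs. xs ! i * A (j+1+i) j) \<le> (\<Sum>i<length ys. ys ! i * A (j+1+i) j)"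
          using h by simp
      qed
    qed
  qed
  have Alow: "\<forall>k\<in>{1..m1}. \<forall>l\<in>{1..m1}. k < l \<longrightarrow> A k l = 0" using A_lower by auto
  have Ann: "\<forall>k\<in>{1..m1}. \<forall>l\<in>{1..m1}. 0 \<le> A k l" using A_nonneg by auto
  have Adg: "\<forall>k\<in>{1..m1}. A k k = 1" using A_diag by auto
  show ?thesis
  proof (intro exI[of _ g] conjI inc allI impI)
    fix lv assume h: "pos_vec m1 lv \<and> (\<forall>j\<in>{1..m1-1}. g j (map lv [j+1..<m1+1]) < lv j)"
    have w0: "\<forall>j\<in>{1..m1}. 0 \<le> lv j" using h unfolding pos_vec_def by force
    have wc: "\<forall>j\<in>{1..m1}. (\<Sum>k=j+1..m1. lv k * A k j) \<le> lv j"
    proof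
      fix j assume j: "j \<in> {1..m1}"
      show "(\<Sum>k=j+1..m1. lv k * A k j) \<le> lv j"
      proof (cases "j = m1")
        case True then show ?thesis using w0 j by simp
      next
        case False
        then have "j \<in> {1..m1-1}" using j by auto
        then have "g j (map lv [j+1..<m1+1]) < lv j" using h by blast
        then show ?thesis unfolding g_def using g_eval[of j m1 lv A] j by simp
      qed
    qed
    define T where "T = (\<Sum>l=1..m1. lv l)"
    have T0: "T \<ge> 0" unfolding T_def using w0 by (intro sum_nonneg) auto
    have Tp: "T * L2 + 1 > 0" using T0 L2 by (simp add: add_nonneg_pos)
    show "\<exists>Ll>0.
                 (\<forall>u. nonneg_vec m1 u \<longrightarrow>
                    (\<Sum>i=1..m1. lv i * F i u) \<le> Ll * ((\<Sum>i=1..m1. u i powr p\<Omega>) + 1)) \<and>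
                 (\<forall>u v. nonneg_vec m1 u \<longrightarrow> nonneg_vec m2 v \<longrightarrow>
                    (\<Sum>i=1..m1. lv i * G i u v)
                      \<le> Ll * ((\<Sum>i=1..m1. u i powr pM) + (\<Sum>j=1..m2. v j powr pM) + 1))"
    proof (intro exI[of _ "T * L2 + 1"] conjI Tp allI impI)
      fix u assume u: "nonneg_vec m1 u"
      define X where "X = (\<Sum>i=1..m1. u i powr p\<Omega>) + 1"
      have X1: "X \<ge> 1" unfolding X_def by (simp add: sum_nonneg)
      have R: "\<forall>k\<in>{1..m1}. (\<Sum>l=1..m1. A k l * F l u) \<le> L2 * X"
        using hF u unfolding X_def by auto
      have "(\<Sum>l=1..m1. lv l * F l u) \<le> T * (L2 * X)" unfolding T_def
        by (rule peel[OF Alow Ann Adg R _ w0 wc]) (use L2 X1 in simp)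
      then show "(\<Sum>i=1..m1. lv i * F i u) \<le> (T * L2 + 1) * ((\<Sum>i=1..m1. u i powr p\<Omega>) + 1)"
        using final_bound[OF _ X1 T0 L2] unfolding X_def by blast
    next
      fix u v assume u: "nonneg_vec m1 u" and v: "nonneg_vec m2 v"
      define X where "X = (\<Sum>i=1..m1. u i powr pM) + (\<Sum>j=1..m2. v j powr pM) + 1"
      have X1: "X \<ge> 1" unfolding X_def by (simp add: sum_nonneg add_nonneg_nonneg)
      have R: "\<forall>k\<in>{1..m1}. (\<Sum>l=1..m1. A k l * G l u v) \<le> L2 * X"
        using hG u v unfolding X_def by auto
      have "(\<Sum>l=1..m1. lv l * G l u v) \<le> T * (L2 * X)" unfolding T_def
        by (rule peel[OF Alow Ann Adg R _ w0 wc]) (use L2 X1 in simp)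
      then show "(\<Sum>i=1..m1. lv i * G i u v) \<le> (T * L2 + 1) * ((\<Sum>i=1..m1. u i powr pM) + (\<Sum>j=1..m2. v j powr pM) + 1)"
        using final_bound[OF _ X1 T0 L2] unfolding X_def by blast
    qed
  qed
qed

end
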